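(* Let $S$ be a standard quantum entity on a finite-dimensional complex Hilbert space $\mathcal{H}$. For unit vectors $c,d\in\mathcal{H}$ with corresponding states $p_{\bar c},p_{\bar d}$, we have $p_{\bar c}\perp p_{\bar d}$ if and only if $c\perp d$ (i.e. $\langle c,d\rangle=0$).
   Context: A spectral family of $\mathcal{H}$ is a set $E=\{E_1,\dots,E_r\}$ of pairwise orthogonal nonzero orthogonal projections with $\sum_kE_k=I$. The standard quantum entity on $\mathcal{H}$ has states $p_{\bar c}$, one for each ray $\bar c$ (one-dimensional subspace generated by a unit vector $c$), experiments $e_E$, one for each spectral family $E$, outcomes $x_{E_k}$, one for each orthogonal projection $E_k$, and outcome sets $O(e_E,p_{\bar c})=\{x_{E_k}:E_k\in E,\ E_kc\neq0\}$. State orthogonality: $p\perp q$ iff there is an experiment $e$ with $O(e,p)\cap O(e,q)=\emptyset$. *)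

theory Defs
  imports "HOL-Analysis.Analysis"
begin

text \<open>The finite-dimensional complex Hilbert space is modelled as complex^'n for a finite
index type 'n (dimension CARD('n)); operators are complex^'n^'n matrices.\<close>

definition cinner :: "complex^'n \<Rightarrow> complex^'n \<Rightarrow> complex" where
  "cinner c d = (\<Sum>i\<in>UNIV. cnj (c $ i) * d $ i)"

definition cadjoint :: "complex^'n^'n \<Rightarrow> complex^'n^'n" where
  "cadjoint A = (\<chi> i j. cnj (A $ j $ i))"

definition orth_proj :: "complex^'n^'n \<Rightarrow> bool" where
  "orth_proj P \<longleftrightarrow> P ** P = P \<and> cadjoint P = P"

definition spectral_family :: "(complex^'n^'n) set \<Rightarrow> bool" where
  "spectral_family E \<longleftrightarrow> finite E
     \<and> (\<forall>P\<in>E. orth_proj P \<and> P \<noteq> 0)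
     \<and> (\<forall>P\<in>E. \<forall>Q\<in>E. P \<noteq> Q \<longrightarrow> P ** Q = 0)
     \<and> sum id E = mat 1"

text \<open>The state p_c is indexed by the ray generated by c.\<close>
definition ray :: "complex^'n \<Rightarrow> (complex^'n) set" where
  "ray c = {a *s c | a. True}"

text \<open>Outcome set O(e_E, p_r): outcomes x_{E_k} are identified with the projections E_k.
  For a ray r generated by a unit vector c, E_k c \<noteq> 0 iff E_k v \<noteq> 0 for some v in r.\<close>
definition outcome_set :: "(complex^'n^'n) set \<Rightarrow> (complex^'n) set \<Rightarrow> (complex^'n^'n) set" where
  "outcome_set E r = {P \<in> E. \<exists>v\<in>r. P *v v \<noteq> 0}"

definition state_orth :: "(complex^'n) set \<Rightarrow> (complex^'n) set \<Rightarrow> bool" where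
  "state_orth r s \<longleftrightarrow> (\<exists>E. spectral_family E \<and> outcome_set E r \<inter> outcome_set E s = {})"

end

theory Submission
  imports Defs
begin

lemma cinner_self_norm:
  fixes c :: "complex^'n"
  shows "cinner c c = complex_of_real ((norm c)^2)"
proof -
  have "(norm c)^2 = (\<Sum>i\<in>UNIV. (cmod (c$i))^2)"
    unfolding norm_vec_def L2_set_def by (simp add: sum_nonneg)
  moreover have "cnj (c$i) * c$i = complex_of_real ((cmod (c$i))^2)" for i
    by (metis complex_norm_square mult.commute of_real_power)
  ultimately show ?thesis unfolding cinner_def by simp
qed

lemma cinner_add: "cinner c (x + y) = cinner c x + cinner c y"
  unfolding cinner_def by (simp add: sum.distrib distrib_left)

lemma cinner_zero: "cinner c 0 = 0"
  unfolding cinner_def by simp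

lemma cinner_sum_right:
  fixes c :: "complex^'n"
  shows "cinner c (sum f E) = (\<Sum>P\<in>E. cinner c (f P))"
proof (cases "finite E")
  case True then show ?thesis
    by (induction E rule: finite_induct) (auto simp: cinner_add cinner_zero)
next
  case False then show ?thesis by (simp add: cinner_def)
qed

lemma cinner_adj:
  fixes c d :: "complex^'n"
  shows "cinner c (A *v d) = cinner (cadjoint A *v c) d"
proof -
  have "cinner c (A *v d) = (\<Sum>i\<in>UNIV. \<Sum>j\<in>UNIV. cnj (c$i) * (A$i$j * d$j))"
    unfolding cinner_def matrix_vector_mult_def by (simp add: sum_distrib_left)
  also have "\<dots> = (\<Sum>j\<in>UNIV. \<Sum>i\<in>UNIV. cnj (c$i) * (A$i$j * d$j))"
    by (rule sum.swap)
  also have "\<dots> = cinner (cadjoint A *v c) d"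
    unfolding cinner_def matrix_vector_mult_def cadjoint_def
    by (simp add: sum_distrib_left mult_ac)
  finally show ?thesis .
qed

lemma sum_mat_vec:
  fixes d :: "complex^'n"
  assumes "finite E"
  shows "(sum id E) *v d = (\<Sum>P\<in>E. P *v d)"
  using assms by (induction E rule: finite_induct) (auto simp: matrix_vector_mult_add_rdistrib)

lemma mat_vec_scale:
  fixes A :: "complex^'n^'n"
  shows "A *v (a *s v) = a *s (A *v v)"
  by (simp add: vec_eq_iff matrix_vector_mult_def sum_distrib_left mult_ac)

lemma cinner_scale: "cinner c (a *s d) = a * cinner c d"
  unfolding cinner_def by (simp add: sum_distrib_left mult_ac)

lemma cinner_diff: "cinner c (x - y) = cinner c x - cinner c y"
  unfolding cinner_def by (simp add: sum_subtractf algebra_simps)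

theorem mainTheorem15:
  fixes c d :: "complex^'n"
  assumes "norm c = 1" and "norm d = 1"
  shows "state_orth (ray c) (ray d) \<longleftrightarrow> cinner c d = 0"
proof
  assume "state_orth (ray c) (ray d)"
  then obtain E where E: "spectral_family E" and dis: "outcome_set E (ray c) \<inter> outcome_set E (ray d) = {}"
    unfolding state_orth_def by blast
  have c1: "c \<in> ray c" and d1: "d \<in> ray d" unfolding ray_def
    by (auto intro!: exI[of _ 1])
  have zero: "P *v c = 0 \<or> P *v d = 0" if "P \<in> E" for P
    using dis that c1 d1 unfolding outcome_set_def by blast
  have fin: "finite E" using E unfolding spectral_family_def by simp
  have "cinner c d = cinner c ((sum id E) *v d)"
    using E unfolding spectral_family_def by simp
  also have "\<dots> = (\<Sum>P\<in>E. cinner c (P *v d))"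
    by (simp only: sum_mat_vec[OF fin] cinner_sum_right)
  also have "\<dots> = (\<Sum>P\<in>E. cinner (P *v c) d)"
    using E unfolding spectral_family_def orth_proj_def by (intro sum.cong) (auto simp: cinner_adj)
  also have "\<dots> = 0"
  proof (intro sum.neutral ballI)
    fix P
    assume PE: "P \<in> E"
    then have adj: "cadjoint P = P" using E unfolding spectral_family_def orth_proj_def by blast
    show "cinner (P *v c) d = 0"
    proof (cases "P *v c = 0")
      case True then show ?thesis by (simp add: cinner_def)
    next
      case False
      then have "P *v d = 0" using zero[OF PE] by blast
      then have "cinner c (P *v d) = 0" by (simp add: cinner_def)
      then show ?thesis using cinner_adj[of c P d] adj by simp
    qed
  qed
  finally show "cinner c d = 0" .
next
  assume cd: "cinner c d = 0"
  have cc: "cinner c c = 1" using assms(1) by (simp add: cinner_self_norm)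
  have c0: "c \<noteq> 0" and d0: "d \<noteq> 0" using assms by auto
  define P :: "complex^'n^'n" where "P = (\<chi> i j. c$i * cnj (c$j))"
  define Q where "Q = mat 1 - P"
  have Pv: "P *v v = cinner c v *s c" for v
    unfolding P_def cinner_def matrix_vector_mult_def
    by (simp add: vec_eq_iff sum_distrib_left mult_ac)
  have Qv: "Q *v v = v - cinner c v *s c" for v
    unfolding Q_def by (simp add: matrix_vector_mult_diff_rdistrib Pv)
  have PP: "P ** P = P"
    by (rule matrix_eq[THEN iffD2]) (simp add: matrix_vector_mul_assoc[symmetric] Pv cinner_scale cc)
  have QQ: "Q ** Q = Q"
    by (rule matrix_eq[THEN iffD2]) (simp add: matrix_vector_mul_assoc[symmetric] Qv cinner_scale cinner_diff cc)
  have PQ: "P ** Q = 0"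
    by (rule matrix_eq[THEN iffD2]) (simp add: matrix_vector_mul_assoc[symmetric] Pv Qv cinner_scale cinner_diff cc)
  have QP: "Q ** P = 0"
    by (rule matrix_eq[THEN iffD2]) (simp add: matrix_vector_mul_assoc[symmetric] Pv Qv cinner_scale cinner_diff cc)
  have Padj: "cadjoint P = P"
    unfolding P_def cadjoint_def by (simp add: vec_eq_iff mult.commute)
  have Qadj: "cadjoint Q = Q"
    unfolding Q_def P_def cadjoint_def by (simp add: vec_eq_iff mat_def mult.commute)
  have Pc: "P *v c = c" using Pv cc by simp
  have Pd: "P *v d = 0" using Pv cd by simp
  have Qd: "Q *v d = d" using Qv cd by simp
  have Qc: "Q *v c = 0" using Qv cc by simp
  have P0: "P \<noteq> 0" using Pc c0 by auto
  have Q0: "Q \<noteq> 0" using Qd d0 by auto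
  have PnQ: "P \<noteq> Q" using Pd Qd d0 by auto
  have sf: "spectral_family {P, Q}"
    unfolding spectral_family_def orth_proj_def
    using PP QQ PQ QP Padj Qadj P0 Q0 PnQ by (auto simp: Q_def)
  have o1: "outcome_set {P, Q} (ray c) \<subseteq> {P}"
    unfolding outcome_set_def ray_def using Qc by (auto simp: mat_vec_scale)
  have o2: "P \<notin> outcome_set {P, Q} (ray d)"
    unfolding outcome_set_def ray_def using Pd by (auto simp: mat_vec_scale)
  show "state_orth (ray c) (ray d)"
    unfolding state_orth_def using sf o1 o2 by blast
qed

end
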